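(* Let $s_1,\dots,s_k$ be positive integers. For a continuous function $f$ on $[0,1]$ define $D_{s_1,\dots,s_k}f$ as the iterated integral $$D_{s_1,\dots,s_k}f=\int_0^1 x_0^{s_1-1}x_1\,\chi_{s_2}\cdots\chi_{s_k}\,\overline{f(t)\,dt},$$ where $x_0=\frac{dt}{t}$, $x_1=\frac{dt}{1-t}$, and $\chi_1=\overline{x_1}$, $\chi_2=\overline{x_0}\,x_1$, $\chi_s=\overline{x_0}\,x_0^{s-2}x_1$ for $s\ge3$. Then for every positive integer $n$, $$D_{s_1,\dots,s_k}\big(n x^{n-1}\big)=\sum_{n\ge n_k\ge n_{k-1}\ge\cdots\ge n_1\ge1}\frac{1}{n_1^{s_1}n_2^{s_2}\cdots n_k^{s_k}}.$$
   Context: Iterated integral with bars: for differential forms $\omega_j=g_j(t)\,dt$ on $[0,1]$, $\int_0^1\omega_1\omega_2\cdots\omega_m$ (with some of $\omega_2,\dots,\omega_m$ carrying a bar) denotes $\int_0^1 g_1(u_1)\,du_1\int_{I_2}g_2(u_2)\,du_2\cdots\int_{I_m}g_m(u_m)\,du_m$, where $I_j=(0,u_{j-1})$ if $\omega_j$ carries no bar and $I_j=(u_{j-1},1)$ if $\omega_j$ carries a bar. The first form never carries a bar. Thus the last factor $\overline{f(t)dt}$ means the innermost integral is $\int_{u}^1 f(t)\,dt$ where $u$ is the previous variable. *)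

theory Defs
  imports "HOL-Analysis.Analysis"
begin

text \<open>A one-form g(t) dt on [0,1], paired with a flag telling whether it carries a bar.\<close>
type_synonym form = "(real \<Rightarrow> real) \<times> bool"

fun itint :: "form list \<Rightarrow> real \<Rightarrow> real" where
  "itint [] u = 1"
| "itint ((g, b) # ws) u =
     (if b then integral {u..1} (\<lambda>t. g t * itint ws t)
           else integral {0..u} (\<lambda>t. g t * itint ws t))"

text \<open>Full iterated integral int_0^1 w_1 ... w_m; the first form is unbarred,
  so its range (0,1) is (0,u_0) with u_0 = 1.\<close>
definition iterated_integral :: "form list \<Rightarrow> real" where
  "iterated_integral ws = itint ws 1"

definition x0 :: "real \<Rightarrow> real" where "x0 t = 1 / t"
definition x1 :: "real \<Rightarrow> real" where "x1 t = 1 / (1 - t)"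

definition chi :: "nat \<Rightarrow> form list" where
  "chi s = (if s = 1 then [(x1, True)]
            else (x0, True) # replicate (s - 2) (x0, False) @ [(x1, False)])"

definition D :: "nat list \<Rightarrow> (real \<Rightarrow> real) \<Rightarrow> real" where
  "D ss f = iterated_integral
     (replicate (hd ss - 1) (x0, False) @ [(x1, False)] @ concat (map chi (tl ss)) @ [(f, True)])"

end

theory Submission
  imports Defs
begin

fun S :: "nat list \<Rightarrow> nat \<Rightarrow> nat \<Rightarrow> real" where
  "S [] lo N = 1"
| "S (s # ss) lo N = (\<Sum>m=lo..N. S ss m N / real m ^ s)"

lemma poly_has_int:
  fixes a b :: real
  assumes "a \<le> b"
  shows "((\<lambda>t. \<Sum>m=1..N. c m * t^(m-1)) has_integral (\<Sum>m=1..N. c m * (b^m - a^m) / m)) {a..b}"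
proof -
  define F where "F = (\<lambda>t::real. \<Sum>m=1..N. c m * t^m / m)"
  have d: "(F has_vector_derivative (\<Sum>m=1..N. c m * x^(m-1))) (at x within {a..b})" for x
  proof -
    have "(F has_real_derivative (\<Sum>m=1..N. c m * (real m * x^(m-1)) / m)) (at x within {a..b})"
      unfolding F_def by (intro derivative_eq_intros) auto
    moreover have "(\<Sum>m=1..N. c m * (real m * x^(m-1)) / m) = (\<Sum>m=1..N. c m * x^(m-1))"
      by (rule sum.cong) auto
    ultimately show ?thesis using has_real_derivative_iff_has_vector_derivative by metis
  qed
  have "((\<lambda>t. \<Sum>m=1..N. c m * t^(m-1)) has_integral (F b - F a)) {a..b}"
    by (rule fundamental_theorem_of_calculus[OF assms d])
  moreover have "F b - F a = (\<Sum>m=1..N. c m * (b^m - a^m) / m)"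
    unfolding F_def sum_subtractf[symmetric] by (rule sum.cong) (auto simp: field_simps)
  ultimately show ?thesis by simp
qed

lemma geo1: "(1 - u) * (\<Sum>m=1..M. u^(m-1)) = 1 - (u::real)^M"
proof (induction M)
  case 0 then show ?case by simp
next
  case (Suc M)
  have "(1 - u) * (\<Sum>m=1..Suc M. u^(m-1)) = (1 - u) * (\<Sum>m=1..M. u^(m-1)) + (1 - u) * u^M"
    by (simp add: algebra_simps)
  also have "\<dots> = 1 - u^Suc M" using Suc by (simp add: algebra_simps)
  finally show ?case .
qed

lemma telesc: "(\<Sum>M=1..N. c M * (1 - (u::real)^M)) = (1-u) * (\<Sum>m=1..N. (\<Sum>M=m..N. c M) * u^(m-1))"
proof -
  have "(1-u) * (\<Sum>m=1..N. (\<Sum>M=m..N. c M) * u^(m-1)) = (\<Sum>m=1..N. \<Sum>M\<in>{M. M \<in> {1..N} \<and> m \<le> M}. (1-u) * (c M * u^(m-1)))"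
    unfolding sum_distrib_left sum_distrib_right
    by (intro sum.cong) (auto intro!: sum.cong)
  also have "\<dots> = (\<Sum>M=1..N. \<Sum>m\<in>{m. m \<in> {1..N} \<and> m \<le> M}. (1-u) * (c M * u^(m-1)))"
    by (rule sum.swap_restrict) auto
  also have "\<dots> = (\<Sum>M=1..N. c M * ((1-u) * (\<Sum>m=1..M. u^(m-1))))"
    unfolding sum_distrib_left
    by (intro sum.cong refl) (auto simp: algebra_simps intro!: sum.cong)
  also have "\<dots> = (\<Sum>M=1..N. c M * (1 - u^M))"
    using geo1[of u] by presburger
  finally show ?thesis by simp
qed

lemma step_x1_low:
  assumes h: "\<forall>t\<in>{0..1}. itint ws t = (1-t) * (\<Sum>m=1..N. a m * t^(m-1))"
    and u: "0 \<le> u" "u \<le> 1"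
  shows "itint ((x1,False)#ws) u = (\<Sum>m=1..N. a m / m * u^m)"
proof -
  have "((\<lambda>t. x1 t * itint ws t) has_integral (\<Sum>m=1..N. a m * (u^m - 0^m)/m)) {0..u}"
  proof (rule has_integral_spike_finite[of "{1}" _ _ "\<lambda>t. \<Sum>m=1..N. a m * t^(m-1)"])
    fix t assume t: "t \<in> {0..u} - {1}"
    then have "itint ws t = (1-t) * (\<Sum>m=1..N. a m * t^(m-1))" using h u by auto
    moreover have "1 - t \<noteq> 0" using t by auto
    ultimately show "x1 t * itint ws t = (\<Sum>m=1..N. a m * t^(m-1))"
      by (simp add: x1_def)
  qed (use u poly_has_int in auto)
  then have "itint ((x1,False)#ws) u = (\<Sum>m=1..N. a m * (u^m - 0^m)/m)"
    by (simp add: integral_unique)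
  also have "\<dots> = (\<Sum>m=1..N. a m / m * u^m)"
    by (intro sum.cong) auto
  finally show ?thesis .
qed

lemma step_x0_low:
  assumes h: "\<forall>t\<in>{0..1}. itint ws t = (\<Sum>m=1..N. b m * t^m)"
    and u: "0 \<le> u" "u \<le> 1"
  shows "itint ((x0,False)#ws) u = (\<Sum>m=1..N. b m / m * u^m)"
proof -
  have "((\<lambda>t. x0 t * itint ws t) has_integral (\<Sum>m=1..N. b m * (u^m - 0^m)/m)) {0..u}"
  proof (rule has_integral_spike_finite[of "{0}" _ _ "\<lambda>t. \<Sum>m=1..N. b m * t^(m-1)"])
    fix t assume t: "t \<in> {0..u} - {0}"
    then have "itint ws t = (\<Sum>m=1..N. b m * t^m)" using h u by auto
    moreover have "t \<noteq> 0" using t by auto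
    moreover have "x0 t * (\<Sum>m=1..N. b m * t^m) = (\<Sum>m=1..N. b m * t^(m-1))"
      unfolding sum_distrib_left x0_def
    proof (intro sum.cong refl)
      fix m assume "m \<in> {1..N}"
      then have "t^m = t * t^(m-1)" by (cases m) auto
      then show "1 / t * (b m * t ^ m) = b m * t ^ (m - 1)" using \<open>t \<noteq> 0\<close> by simp
    qed
    ultimately show "x0 t * itint ws t = (\<Sum>m=1..N. b m * t^(m-1))"
      by simp
  qed (use u poly_has_int in auto)
  then have "itint ((x0,False)#ws) u = (\<Sum>m=1..N. b m * (u^m - 0^m)/m)"
    by (simp add: integral_unique)
  also have "\<dots> = (\<Sum>m=1..N. b m / m * u^m)"
    by (intro sum.cong) auto
  finally show ?thesis .
qed

lemma step_x1_bar:
  assumes h: "\<forall>t\<in>{0..1}. itint ws t = (1-t) * (\<Sum>m=1..N. a m * t^(m-1))"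
    and u: "0 \<le> u" "u \<le> 1"
  shows "itint ((x1,True)#ws) u = (1-u) * (\<Sum>m=1..N. (\<Sum>M=m..N. a M / M) * u^(m-1))"
proof -
  have "((\<lambda>t. x1 t * itint ws t) has_integral (\<Sum>m=1..N. a m * (1^m - u^m)/m)) {u..1}"
  proof (rule has_integral_spike_finite[of "{1}" _ _ "\<lambda>t. \<Sum>m=1..N. a m * t^(m-1)"])
    fix t assume t: "t \<in> {u..1} - {1}"
    then have "itint ws t = (1-t) * (\<Sum>m=1..N. a m * t^(m-1))" using h u by auto
    moreover have "1 - t \<noteq> 0" using t by auto
    ultimately show "x1 t * itint ws t = (\<Sum>m=1..N. a m * t^(m-1))"
      by (simp add: x1_def)
  qed (use u poly_has_int[of u 1] in auto)
  then have "itint ((x1,True)#ws) u = (\<Sum>m=1..N. a m * (1^m - u^m)/m)"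
    by (simp add: integral_unique)
  also have "\<dots> = (\<Sum>m=1..N. a m / m * (1 - u^m))"
    by (intro sum.cong) auto
  also have "\<dots> = (1-u) * (\<Sum>m=1..N. (\<Sum>M=m..N. a M / M) * u^(m-1))"
    by (rule telesc)
  finally show ?thesis .
qed

lemma step_x0_bar:
  assumes h: "\<forall>t\<in>{0..1}. itint ws t = (\<Sum>m=1..N. b m * t^m)"
    and u: "0 \<le> u" "u \<le> 1"
  shows "itint ((x0,True)#ws) u = (1-u) * (\<Sum>m=1..N. (\<Sum>M=m..N. b M / M) * u^(m-1))"
proof -
  have "((\<lambda>t. x0 t * itint ws t) has_integral (\<Sum>m=1..N. b m * (1^m - u^m)/m)) {u..1}"
  proof (rule has_integral_spike_finite[of "{0}" _ _ "\<lambda>t. \<Sum>m=1..N. b m * t^(m-1)"])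
    fix t assume t: "t \<in> {u..1} - {0}"
    then have "itint ws t = (\<Sum>m=1..N. b m * t^m)" using h u by auto
    moreover have "t \<noteq> 0" using t by auto
    moreover have "x0 t * (\<Sum>m=1..N. b m * t^m) = (\<Sum>m=1..N. b m * t^(m-1))"
      unfolding sum_distrib_left x0_def
    proof (intro sum.cong refl)
      fix m assume "m \<in> {1..N}"
      then have "t^m = t * t^(m-1)" by (cases m) auto
      then show "1 / t * (b m * t ^ m) = b m * t ^ (m - 1)" using \<open>t \<noteq> 0\<close> by simp
    qed
    ultimately show "x0 t * itint ws t = (\<Sum>m=1..N. b m * t^(m-1))"
      by simp
  qed (use u poly_has_int[of u 1] in auto)
  then have "itint ((x0,True)#ws) u = (\<Sum>m=1..N. b m * (1^m - u^m)/m)"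
    by (simp add: integral_unique)
  also have "\<dots> = (\<Sum>m=1..N. b m / m * (1 - u^m))"
    by (intro sum.cong) auto
  also have "\<dots> = (1-u) * (\<Sum>m=1..N. (\<Sum>M=m..N. b M / M) * u^(m-1))"
    by (rule telesc)
  finally show ?thesis .
qed

lemma rep_x0:
  assumes h: "\<forall>t\<in>{0..1}. itint ws t = (\<Sum>m=1..N. b m * t^m)"
  shows "\<forall>u\<in>{0..1}. itint (replicate j (x0,False) @ ws) u = (\<Sum>m=1..N. b m / m^j * u^m)"
proof (induction j)
  case 0 then show ?case using h by simp
next
  case (Suc j)
  show ?case
  proof
    fix u :: real assume u: "u \<in> {0..1}"
    have "itint (replicate (Suc j) (x0,False) @ ws) u = itint ((x0,False) # (replicate j (x0,False) @ ws)) u"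
      by simp
    also have "\<dots> = (\<Sum>m=1..N. b m / m^j / m * u^m)"
      by (rule step_x0_low[OF Suc]) (use u in auto)
    also have "\<dots> = (\<Sum>m=1..N. b m / m^Suc j * u^m)"
      by (intro sum.cong) (auto simp: field_simps)
    finally show "itint (replicate (Suc j) (x0,False) @ ws) u = (\<Sum>m=1..N. b m / m^Suc j * u^m)" .
  qed
qed

lemma chi_step:
  assumes h: "\<forall>t\<in>{0..1}. itint ws t = (1-t) * (\<Sum>m=1..N. a m * t^(m-1))"
    and s: "s > 0"
  shows "\<forall>u\<in>{0..1}. itint (chi s @ ws) u = (1-u) * (\<Sum>m=1..N. (\<Sum>M=m..N. a M / M^s) * u^(m-1))"
proof
  fix u :: real assume u: "u \<in> {0..1}"
  show "itint (chi s @ ws) u = (1-u) * (\<Sum>m=1..N. (\<Sum>M=m..N. a M / M^s) * u^(m-1))"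
  proof (cases "s = 1")
    case True
    then have "itint (chi s @ ws) u = itint ((x1,True) # ws) u" by (simp add: chi_def)
    also have "\<dots> = (1-u) * (\<Sum>m=1..N. (\<Sum>M=m..N. a M / M) * u^(m-1))"
      by (rule step_x1_bar[OF h]) (use u in auto)
    finally show ?thesis using True by simp
  next
    case False
    then obtain k where k: "s = Suc (Suc k)" using s by (metis Suc_pred' One_nat_def not0_implies_Suc)
    have "chi s @ ws = (x0,True) # (replicate k (x0,False) @ ((x1,False) # ws))"
      using k by (simp add: chi_def)
    then have "itint (chi s @ ws) u = itint ((x0,True) # (replicate k (x0,False) @ ((x1,False) # ws))) u"
      by simp
    also have "\<dots> = (1-u) * (\<Sum>m=1..N. (\<Sum>M=m..N. a M / M / M^k / M) * u^(m-1))"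
    proof (rule step_x0_bar[OF rep_x0])
      show "\<forall>t\<in>{0..1}. itint ((x1, False) # ws) t = (\<Sum>m = 1..N. a m / real m * t ^ m)"
        using step_x1_low[OF h] by auto
    qed (use u in auto)
    also have "\<dots> = (1-u) * (\<Sum>m=1..N. (\<Sum>M=m..N. a M / M^s) * u^(m-1))"
      using k by (intro arg_cong2[where f="(*)"] refl sum.cong) (auto simp: field_simps)
    finally show ?thesis .
  qed
qed

lemma chis:
  assumes "\<forall>s\<in>set ss. s > 0" and n: "n > 0"
  shows "\<forall>u\<in>{0..1}. itint (concat (map chi ss) @ [(\<lambda>x. real n * x^(n-1), True)]) u
           = (1-u) * (\<Sum>m=1..n. S ss m n * u^(m-1))"
  using assms(1)
proof (induction ss)
  case Nil
  show ?case
  proof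
    fix u :: real assume u: "u \<in> {0..1}"
    have "((\<lambda>t. real n * t^(n-1) * 1) has_integral (\<Sum>m=1..n. (if m = n then real n else 0) * (1^m - u^m)/m)) {u..1}"
    proof (rule has_integral_spike_finite[of "{}" _ _ "\<lambda>t. \<Sum>m=1..n. (if m = n then real n else 0) * t^(m-1)"])
      fix t :: real
      show "real n * t^(n-1) * 1 = (\<Sum>m=1..n. (if m = n then real n else 0) * t^(m-1))"
      proof -
        have "(\<Sum>m=1..n. (if m = n then real n else 0) * t^(m-1)) = (\<Sum>m=1..n. if m = n then real n * t^(n-1) else 0)"
          by (intro sum.cong) auto
        then show ?thesis using n by simp
      qed
    qed (use u poly_has_int[of u 1] in auto)
    moreover have "(\<Sum>m=1..n. (if m = n then real n else 0) * (1^m - u^m)/m) = 1 - u^n"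
    proof -
      have "(\<Sum>m=1..n. (if m = n then real n else 0) * (1^m - u^m)/m) = (\<Sum>m=1..n. if m = n then real n * (1 - u^n)/n else 0)"
        by (intro sum.cong) auto
      then show ?thesis using n by simp
    qed
    ultimately have "integral {u..1} (\<lambda>t. real n * t^(n-1) * 1) = 1 - u^n"
      by (metis integral_unique)
    then have "itint [(\<lambda>x. real n * x^(n-1), True)] u = 1 - u^n"
      by simp
    then show "itint (concat (map chi []) @ [(\<lambda>x. real n * x^(n-1), True)]) u
           = (1-u) * (\<Sum>m=1..n. S [] m n * u^(m-1))"
      using geo1[of u n] by simp
  qed
next
  case (Cons s ss)
  have "\<forall>u\<in>{0..1}. itint (chi s @ (concat (map chi ss) @ [(\<lambda>x. real n * x^(n-1), True)])) u
           = (1-u) * (\<Sum>m=1..n. (\<Sum>M=m..n. S ss M n / M^s) * u^(m-1))"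
    by (rule chi_step) (use Cons in auto)
  then show ?case by simp
qed

lemma S_eq:
  "S ss lo N = (\<Sum>ns \<in> {ns. length ns = length ss \<and> sorted ns \<and> set ns \<subseteq> {lo..N}}.
        \<Prod>i < length ss. 1 / real (ns ! i) ^ (ss ! i))"
proof (induction ss arbitrary: lo)
  case Nil
  have "{ns::nat list. length ns = 0 \<and> sorted ns \<and> set ns \<subseteq> {lo..N}} = {[]}" by auto
  then show ?case by simp
next
  case (Cons s ss)
  define T where "T m = {ns. length ns = length ss \<and> sorted ns \<and> set ns \<subseteq> {m..N}}" for m
  define f where "f ns = (\<Prod>i < length ss. 1 / real (ns ! i) ^ (ss ! i))" for ns
  have finT: "finite (T m)" for m
  proof (rule finite_subset)
    show "T m \<subseteq> {xs. set xs \<subseteq> {m..N} \<and> length xs = length ss}" unfolding T_def by auto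
  qed (rule finite_lists_length_eq, simp)
  have A: "{ns. length ns = length (s#ss) \<and> sorted ns \<and> set ns \<subseteq> {lo..N}}
      = (\<lambda>(m,t). m#t) ` (SIGMA m:{lo..N}. T m)"
  proof (intro set_eqI iffI)
    fix ns assume "ns \<in> {ns. length ns = length (s#ss) \<and> sorted ns \<and> set ns \<subseteq> {lo..N}}"
    then obtain m t where ns: "ns = m # t" and l: "length t = length ss" and st: "sorted (m#t)"
      and sub: "set (m#t) \<subseteq> {lo..N}"
      by (cases ns) auto
    have "t \<in> T m" using l st sub unfolding T_def by auto
    then show "ns \<in> (\<lambda>(m,t). m#t) ` (SIGMA m:{lo..N}. T m)"
      using ns sub by force
  next
    fix ns assume "ns \<in> (\<lambda>(m,t). m#t) ` (SIGMA m:{lo..N}. T m)"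
    then obtain m t where ns: "ns = m # t" and m: "m \<in> {lo..N}" and t: "t \<in> T m" by auto
    show "ns \<in> {ns. length ns = length (s#ss) \<and> sorted ns \<and> set ns \<subseteq> {lo..N}}"
      using ns m t unfolding T_def by auto
  qed
  have inj: "inj_on (\<lambda>(m,t). m#t) (SIGMA m:{lo..N}. T m)"
    by (auto simp: inj_on_def)
  have "(\<Sum>ns \<in> {ns. length ns = length (s#ss) \<and> sorted ns \<and> set ns \<subseteq> {lo..N}}.
        \<Prod>i < length (s#ss). 1 / real (ns ! i) ^ ((s#ss) ! i))
     = (\<Sum>p \<in> (SIGMA m:{lo..N}. T m). \<Prod>i < length (s#ss). 1 / real (((\<lambda>(m,t). m#t) p) ! i) ^ ((s#ss) ! i))"
    unfolding A by (rule sum.reindex[OF inj, unfolded comp_def])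
  also have "\<dots> = (\<Sum>m=lo..N. \<Sum>t\<in>T m. \<Prod>i < length (s#ss). 1 / real ((m#t) ! i) ^ ((s#ss) ! i))"
    by (subst sum.Sigma) (simp_all add: finT split_def)
  also have "\<dots> = (\<Sum>m=lo..N. \<Sum>t\<in>T m. 1 / real m ^ s * f t)"
    unfolding f_def by (simp add: prod.lessThan_Suc_shift del: prod.lessThan_Suc)
  also have "\<dots> = (\<Sum>m=lo..N. S ss m N / real m ^ s)"
    using Cons unfolding f_def T_def by (simp add: sum_divide_distrib)
  finally show ?case by simp
qed

theorem lemma4p3:
  fixes ss :: "nat list" and n :: nat
  assumes "ss \<noteq> []" and "\<forall>s \<in> set ss. s > 0" and "n > 0"
  shows "D ss (\<lambda>x. real n * x ^ (n - 1)) =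
    (\<Sum>ns \<in> {ns. length ns = length ss \<and> sorted ns \<and> set ns \<subseteq> {1..n}}.
        \<Prod>i < length ss. 1 / real (ns ! i) ^ (ss ! i))"
proof -
  obtain s1 tl1 where ss: "ss = s1 # tl1" using assms(1) by (cases ss) auto
  have s1: "s1 > 0" and tl1: "\<forall>s\<in>set tl1. s > 0" using assms(2) ss by auto
  define ws where "ws = concat (map chi tl1) @ [(\<lambda>x. real n * x^(n-1), True)]"
  have h: "\<forall>t\<in>{0..1}. itint ws t = (1-t) * (\<Sum>m=1..n. S tl1 m n * t^(m-1))"
    unfolding ws_def by (rule chis[OF tl1 assms(3)])
  have h2: "\<forall>t\<in>{0..1}. itint ((x1,False) # ws) t = (\<Sum>m=1..n. S tl1 m n / m * t^m)"
    using step_x1_low[OF h] by auto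
  have "D ss (\<lambda>x. real n * x ^ (n - 1)) = itint (replicate (s1 - 1) (x0,False) @ ((x1,False) # ws)) 1"
    by (simp add: D_def iterated_integral_def ss ws_def)
  also have "\<dots> = (\<Sum>m=1..n. S tl1 m n / m / m^(s1-1) * 1^m)"
    using rep_x0[OF h2] by auto
  also have "\<dots> = S ss 1 n"
  proof -
    obtain k where k: "s1 = Suc k" using s1 by (cases s1) auto
    show ?thesis unfolding ss S.simps k
      by (intro sum.cong refl) (simp add: divide_divide_eq_left mult.commute)
  qed
  finally show ?thesis using S_eq by simp
qed

end
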